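(* Fix a state $\bm{s}$ and let $\mathcal{A}=\mathcal{A}(\bm{s})\subseteq\{0,1\}^m$ be a finite nonempty set. Let $\bm{a}^\star(\bm{s},\cdot):\mathbb{S}^{m-1}\to\mathcal{A}$ be the solver mapping, $\bm{a}^\star(\bm{s},\bm{c})\in\operatorname*{argmin}_{\bm{a}\in\mathcal{A}}\bm{c}^\top\bm{a}$, where ties are broken by a fixed deterministic rule (so that $\bm{a}^\star(\bm{s},\cdot)$ is a well-defined Borel measurable function). Then for every probability distribution $\mu$ on $\mathcal{A}$ there exists a Borel probability distribution $\pi$ on $\mathbb{S}^{m-1}$ such that, if $\bm{c}\sim\pi$, then \[ \mathbb{P}\big[\bm{a}^\star(\bm{s},\bm{c})=\bm{a}\big]=\mu(\bm{a})\qquad\text{for all }\bm{a}\in\mathcal{A}. \]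
   Context: $\mathbb{S}^{m-1}=\{\bm{c}\in\mathbb{R}^m:\|\bm{c}\|_2=1\}$ is the unit sphere. Feasible actions are binary vectors in $\{0,1\}^m$. *)

theory Defs
  imports "HOL-Analysis.Analysis" "HOL-Probability.Probability"
begin

definition binary_vecs :: "(real ^ 'n) set" where
  "binary_vecs = {x. \<forall>i. x $ i \<in> {0, 1}}"

end

theory Submission
  imports Defs
begin

definition dirv :: "real ^ 'n \<Rightarrow> real ^ 'n" where
  "dirv x = (\<chi> i. if x $ i = 0 then 1 else -1)"

lemma dirv_nz: "dirv x \<noteq> 0"
proof
  assume "dirv x = 0"
  then have "dirv x $ undefined = 0" by simp
  then show False by (simp add: dirv_def split: if_splits)
qed

lemma dirv_min:
  assumes "x \<in> binary_vecs" "y \<in> binary_vecs" "dirv x \<bullet> y \<le> dirv x \<bullet> x"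
  shows "y = x"
proof (rule ccontr)
  assume ne: "y \<noteq> x"
  then obtain j where j: "y $ j \<noteq> x $ j" by (metis vec_eq_iff)
  have t: "dirv x $ i * y $ i - dirv x $ i * x $ i \<ge> 0" for i
    using assms(1,2) unfolding binary_vecs_def dirv_def by (auto dest!: spec[of _ i])
  have tj: "dirv x $ j * y $ j - dirv x $ j * x $ j > 0"
    using assms(1,2) j unfolding binary_vecs_def dirv_def by (auto dest!: spec[of _ j])
  have "0 < (\<Sum>i\<in>UNIV. dirv x $ i * y $ i - dirv x $ i * x $ i)"
    by (rule sum_pos2[of UNIV j]) (use t tj in auto)
  also have "\<dots> = dirv x \<bullet> y - dirv x \<bullet> x"
    by (simp add: inner_vec_def sum_subtractf)
  finally show False using assms(3) by simp
qed

theorem proposition1: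
  fixes A :: "(real ^ 'n) set"
    and astar :: "real ^ 'n \<Rightarrow> real ^ 'n"
  assumes "finite A" and "A \<noteq> {}" and "A \<subseteq> binary_vecs"
    and "\<forall>c \<in> sphere 0 1. astar c \<in> A \<and> (\<forall>a \<in> A. c \<bullet> astar c \<le> c \<bullet> a)"
    and "astar \<in> borel_measurable (restrict_space borel (sphere (0 :: real ^ 'n) 1))"
  shows "\<forall>\<mu> :: (real ^ 'n) pmf. set_pmf \<mu> \<subseteq> A \<longrightarrow>
           (\<exists>\<pi>. prob_space \<pi> \<and> sets \<pi> = sets (restrict_space borel (sphere (0 :: real ^ 'n) 1)) \<and>
                (\<forall>a \<in> A. measure \<pi> {c \<in> space \<pi>. astar c = a} = pmf \<mu> a))"
proof (intro allI impI)
  fix \<mu> :: "(real ^ 'n) pmf"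
  assume sub: "set_pmf \<mu> \<subseteq> A"
  define f :: "real ^ 'n \<Rightarrow> real ^ 'n" where "f x = dirv x /\<^sub>R norm (dirv x)" for x
  define N where "N = restrict_space borel (sphere (0 :: real ^ 'n) 1)"
  have fs: "f x \<in> sphere 0 1" for x
    using dirv_nz[of x] by (simp add: f_def)
  have fa: "astar (f x) = x" if "x \<in> A" for x
  proof -
    have "astar (f x) \<in> A" "f x \<bullet> astar (f x) \<le> f x \<bullet> x"
      using assms(4) fs that by auto
    then have "dirv x \<bullet> astar (f x) \<le> dirv x \<bullet> x"
      using dirv_nz[of x] by (simp add: f_def divide_right_mono divide_le_cancel)
    then show ?thesis using dirv_min[of x "astar (f x)"] assms(3) that \<open>astar (f x) \<in> A\<close> by auto
  qed
  have fm: "f \<in> measurable (measure_pmf \<mu>) N"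
    using fs by (simp add: N_def space_restrict_space)
  define \<pi> where "\<pi> = distr (measure_pmf \<mu>) N f"
  have "prob_space \<pi>"
    unfolding \<pi>_def by (rule prob_space.prob_space_distr[OF _ fm]) (rule prob_space_measure_pmf)
  moreover have "sets \<pi> = sets N" by (simp add: \<pi>_def)
  moreover have "measure \<pi> {c \<in> space \<pi>. astar c = a} = pmf \<mu> a" if "a \<in> A" for a
  proof -
    have sp: "space \<pi> = space N" by (simp add: \<pi>_def)
    have meas: "{c \<in> space N. astar c = a} \<in> sets N"
      using assms(5) unfolding N_def by measurable
    have "measure \<pi> {c \<in> space \<pi>. astar c = a}
        = measure (measure_pmf \<mu>) (f -` {c \<in> space N. astar c = a} \<inter> space (measure_pmf \<mu>))"
      using measure_distr[OF fm meas] sp by (simp add: \<pi>_def)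
    also have "\<dots> = measure (measure_pmf \<mu>) ((f -` {c \<in> space N. astar c = a}) \<inter> set_pmf \<mu>)"
      by (simp add: measure_Int_set_pmf)
    also have "(f -` {c \<in> space N. astar c = a}) \<inter> set_pmf \<mu> = {a} \<inter> set_pmf \<mu>"
      using fa sub fs by (auto simp: N_def space_restrict_space)
    also have "measure (measure_pmf \<mu>) ({a} \<inter> set_pmf \<mu>) = pmf \<mu> a"
      by (simp add: measure_Int_set_pmf measure_pmf_single)
    finally show ?thesis .
  qed
  ultimately show "\<exists>\<pi>. prob_space \<pi> \<and> sets \<pi> = sets (restrict_space borel (sphere (0 :: real ^ 'n) 1)) \<and>
                (\<forall>a \<in> A. measure \<pi> {c \<in> space \<pi>. astar c = a} = pmf \<mu> a)"
    unfolding N_def by blast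
qed

end
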